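(* Let $g:\mathds{R}^d\setminus\{0\}\to[0,\infty)$ be continuous and let $(\mu_n)\subset K^g(\mathds{R}^d,\mathcal{M}^+(\mathds{R}^d\setminus\{0\}))$ converge boundedly and pointwise to $\mu:\mathds{R}^d\to\mathcal{M}^+(\mathds{R}^d\setminus\{0\})$. Then $\mu\in K^g(\mathds{R}^d,\mathcal{M}^+(\mathds{R}^d\setminus\{0\}))$.
   Context: $\mathcal{M}^+(\mathds{R}^d\setminus\{0\})$: positive locally finite measures on $\mathds{R}^d\setminus\{0\}$ with the vague topology. $K^g$: measurable maps $\mu:\mathds{R}^d\to\mathcal{M}^+(\mathds{R}^d\setminus\{0\})$ with $\|\mu\|_g:=\sup_x\int g(y)\mu(x,dy)<\infty$ and $\lim_{R\to\infty}\sup_{x\in K}\mu(x,\{|y|>R\})=0$ for every compact $K\subset\mathds{R}^d$. Bounded pointwise convergence $\mu_n\to\mu$: $\sup_n\|\mu_n\|_g<\infty$, $\mu_n(x)\to\mu(x)$ vaguely for every $x$, and $\lim_{R\to\infty}\sup_n\sup_{x\in K}\mu_n(x,\{|y|>R\})=0$ for every compact $K$. *)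

theory Defs
  imports "HOL-Analysis.Analysis"
begin

text \<open>A positive measure on R^d minus the origin is modelled as a Borel measure on
  the euclidean space 'a that puts no mass on the origin.\<close>

definition Mplus :: "'a::euclidean_space measure \<Rightarrow> bool" where
  "Mplus M \<longleftrightarrow> sets M = sets borel \<and> emeasure M {0} = 0 \<and>
     (\<forall>K. compact K \<and> K \<subseteq> - {0} \<longrightarrow> emeasure M K < \<infinity>)"

definition Cc0 :: "('a::euclidean_space \<Rightarrow> real) \<Rightarrow> bool" where
  "Cc0 f \<longleftrightarrow> continuous_on UNIV f \<and>
     (\<exists>K. compact K \<and> K \<subseteq> - {0} \<and> (\<forall>y. y \<notin> K \<longrightarrow> f y = 0))"

definition vague_conv :: "(nat \<Rightarrow> 'a::euclidean_space measure) \<Rightarrow> 'a measure \<Rightarrow> bool" where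
  "vague_conv Ms M \<longleftrightarrow>
     (\<forall>f. Cc0 f \<longrightarrow> (\<lambda>n. integral\<^sup>L (Ms n) f) \<longlonglongrightarrow> integral\<^sup>L M f)"

text \<open>Measurability of a kernel x -> mu(x) for the Borel sigma algebra of the vague
  topology, i.e. the sigma algebra generated by the maps nu -> integral of f over nu, f in C_c.\<close>

definition kernel_measurable :: "('a::euclidean_space \<Rightarrow> 'a measure) \<Rightarrow> bool" where
  "kernel_measurable \<mu> \<longleftrightarrow>
     (\<forall>f. Cc0 f \<longrightarrow> (\<lambda>x. integral\<^sup>L (\<mu> x) f) \<in> borel_measurable borel)"

definition gnorm :: "('a::euclidean_space \<Rightarrow> real) \<Rightarrow> ('a \<Rightarrow> 'a measure) \<Rightarrow> ennreal" where
  "gnorm g \<mu> = (SUP x. \<integral>\<^sup>+ y. ennreal (g y) \<partial>(\<mu> x))"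

definition tight_on_compacts :: "('a::euclidean_space \<Rightarrow> 'a measure) \<Rightarrow> bool" where
  "tight_on_compacts \<mu> \<longleftrightarrow>
     (\<forall>K. compact K \<longrightarrow>
        ((\<lambda>R::real. SUP x\<in>K. emeasure (\<mu> x) {y. norm y > R}) \<longlongrightarrow> 0) at_top)"

definition Kg :: "('a::euclidean_space \<Rightarrow> real) \<Rightarrow> ('a \<Rightarrow> 'a measure) set" where
  "Kg g = {\<mu>. (\<forall>x. Mplus (\<mu> x)) \<and> kernel_measurable \<mu> \<and> gnorm g \<mu> < \<infinity> \<and>
              tight_on_compacts \<mu>}"

definition bdd_pointwise_conv ::
  "('a::euclidean_space \<Rightarrow> real) \<Rightarrow> (nat \<Rightarrow> 'a \<Rightarrow> 'a measure) \<Rightarrow> ('a \<Rightarrow> 'a measure) \<Rightarrow> bool" where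
  "bdd_pointwise_conv g \<mu>s \<mu> \<longleftrightarrow>
     (SUP n. gnorm g (\<mu>s n)) < \<infinity> \<and>
     (\<forall>x. vague_conv (\<lambda>n. \<mu>s n x) (\<mu> x)) \<and>
     (\<forall>K. compact K \<longrightarrow>
        ((\<lambda>R::real. SUP n. SUP x\<in>K. emeasure (\<mu>s n x) {y. norm y > R}) \<longlongrightarrow> 0) at_top)"

end

theory Submission
  imports Defs
begin

lemma Cc0_integrable:
  assumes M: "Mplus M" and f: "Cc0 f"
  shows "integrable M f"
proof -
  from f obtain K where K: "compact K" "K \<subseteq> - {0}" "\<And>y. y \<notin> K \<Longrightarrow> f y = 0"
    and c: "continuous_on UNIV f" unfolding Cc0_def by auto
  have sM: "sets M = sets borel" using M by (simp add: Mplus_def)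
  have fm: "f \<in> borel_measurable M"
    using borel_measurable_continuous_onI[OF c] measurable_cong_sets[OF sM refl] by blast
  have KM: "K \<in> sets M" using K(1) sM by (simp add: borel_closed compact_imp_closed)
  have fin: "emeasure M K < \<infinity>" using M K unfolding Mplus_def by auto
  have "compact (f ` K)" using K(1) c by (meson compact_continuous_image continuous_on_subset subset_UNIV)
  then obtain B where B: "\<And>y. y \<in> K \<Longrightarrow> norm (f y) \<le> B"
    by (meson bounded_iff compact_imp_bounded image_eqI)
  show ?thesis
    by (rule integrableI_bounded_set[OF KM fm fin, of B]) (auto intro!: AE_I2 simp: K(3) dest: B)
qed

definition clamp :: "real \<Rightarrow> real" where "clamp t = max 0 (min 1 t)"

lemma clamp_cont: "continuous_on UNIV clamp"
  unfolding clamp_def by (intro continuous_intros)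

lemma clamp_bounds: "0 \<le> clamp t" "clamp t \<le> 1"
  unfolding clamp_def by auto

lemma Cc0_cut:
  fixes g :: "'a::euclidean_space \<Rightarrow> real"
  assumes g: "continuous_on (- {0}) g" and psi: "continuous_on UNIV psi" and a: "0 < a"
    and z: "\<And>t. t \<le> a \<or> t \<ge> b \<Longrightarrow> psi t = 0"
  shows "Cc0 (\<lambda>y. g y * psi (norm y))"
  unfolding Cc0_def
proof (intro conjI exI)
  let ?K = "{y::'a. a \<le> norm y \<and> norm y \<le> b}"
  have "?K = {y. a \<le> norm y} \<inter> cball 0 b" by auto
  moreover have "closed {y::'a. a \<le> norm y}"
    using closed_Compl[OF open_ball[of "0::'a" a]] by (simp add: Compl_eq dist_norm not_less)
  ultimately show "compact ?K" by (metis Int_commute compact_Int_closed compact_cball)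
  show "?K \<subseteq> - {0}" using a by auto
  show "\<forall>y. y \<notin> ?K \<longrightarrow> g y * psi (norm y) = 0" using z by auto
  have A: "closed {y::'a. a \<le> norm y}"
    using closed_Compl[OF open_ball[of "0::'a" a]] by (simp add: Compl_eq dist_norm not_less)
  have "continuous_on {y::'a. a \<le> norm y} (\<lambda>y. g y * psi (norm y))"
  proof (intro continuous_intros)
    show "continuous_on {y::'a. a \<le> norm y} g"
      by (rule continuous_on_subset[OF g]) (use a in auto)
    show "continuous_on {y::'a. a \<le> norm y} (\<lambda>y. psi (norm y))"
      by (rule continuous_on_compose2[OF psi]) (auto intro: continuous_intros)
  qed
  moreover have "continuous_on (cball (0::'a) a) (\<lambda>y. g y * psi (norm y))"
    by (rule continuous_on_cong[THEN iffD2, OF refl, of _ _ "\<lambda>_. 0"]) (auto simp: z)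
  ultimately have "continuous_on ({y::'a. a \<le> norm y} \<union> cball 0 a) (\<lambda>y. g y * psi (norm y))"
    using A by (intro continuous_on_closed_Un) auto
  moreover have "{y::'a. a \<le> norm y} \<union> cball 0 a = UNIV" by auto
  ultimately show "continuous_on UNIV (\<lambda>y. g y * psi (norm y))" by simp
qed

lemma Mplus_AE_nz: assumes "Mplus M" shows "AE y in M. y \<noteq> 0"
proof (rule AE_I'[of "{0}"])
  show "{0} \<in> null_sets M" using assms unfolding Mplus_def by (auto simp: null_sets_def)
qed auto

lemma Cc0_meas: assumes "Mplus M" "Cc0 f" shows "f \<in> borel_measurable M"
proof -
  have sM: "sets M = sets borel" using assms by (simp add: Mplus_def)
  show ?thesis using assms(2) borel_measurable_continuous_onI measurable_cong_sets[OF sM refl]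
    unfolding Cc0_def by blast
qed

lemma lsc:
  fixes h :: "'a::euclidean_space \<Rightarrow> ennreal"
  assumes vc: "vague_conv Ms M" and M: "Mplus M" and Ms: "\<And>n. Mplus (Ms n)"
   and f: "\<And>k. Cc0 (f k)" and fpos: "\<And>k y. 0 \<le> f k y"
   and fh: "\<And>k y. ennreal (f k y) \<le> h y"
   and conv: "\<And>y. y \<noteq> 0 \<Longrightarrow> ((\<lambda>k. ennreal (f k y)) \<longlongrightarrow> h y) sequentially"
   and C: "\<And>n. integral\<^sup>N (Ms n) h \<le> C"
  shows "integral\<^sup>N M h \<le> C"
proof (cases "C = \<infinity>")
  case True then show ?thesis by simp
next
  case False
  have bound: "integral\<^sup>N M (\<lambda>y. ennreal (f k y)) \<le> C" for k
  proof -
    have le: "integral\<^sup>L (Ms n) (f k) \<le> enn2real C" for n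
    proof -
      have "ennreal (integral\<^sup>L (Ms n) (f k)) = integral\<^sup>N (Ms n) (\<lambda>y. ennreal (f k y))"
        using Cc0_integrable[OF Ms f] fpos by (intro nn_integral_eq_integral[symmetric]) auto
      also have "\<dots> \<le> integral\<^sup>N (Ms n) h" by (intro nn_integral_mono fh)
      also have "\<dots> \<le> C" by (rule C)
      finally have "ennreal (integral\<^sup>L (Ms n) (f k)) \<le> C" .
      moreover have "0 \<le> integral\<^sup>L (Ms n) (f k)" using fpos by (intro integral_nonneg_AE) auto
      ultimately show ?thesis using False enn2real_mono[of "ennreal (integral\<^sup>L (Ms n) (f k))" C]
        by (simp add: top.not_eq_extremum)
    qed
    have lim: "(\<lambda>n. integral\<^sup>L (Ms n) (f k)) \<longlonglongrightarrow> integral\<^sup>L M (f k)"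
      using vc f unfolding vague_conv_def by blast
    have "integral\<^sup>L M (f k) \<le> enn2real C"
      by (rule LIMSEQ_le_const2[OF lim]) (use le in auto)
    moreover have "integral\<^sup>N M (\<lambda>y. ennreal (f k y)) = ennreal (integral\<^sup>L M (f k))"
      using Cc0_integrable[OF M f] fpos by (intro nn_integral_eq_integral) auto
    ultimately show ?thesis using False ennreal_leI[of "integral\<^sup>L M (f k)" "enn2real C"]
      by (simp add: top.not_eq_extremum)
  qed
  have "integral\<^sup>N M h \<le> (\<integral>\<^sup>+ y. liminf (\<lambda>k. ennreal (f k y)) \<partial>M)"
  proof (rule nn_integral_mono_AE)
    show "AE y in M. h y \<le> liminf (\<lambda>k. ennreal (f k y))"
      using Mplus_AE_nz[OF M] by eventually_elim (simp add: lim_imp_Liminf[OF trivial_limit_sequentially conv])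
  qed
  also have "\<dots> \<le> liminf (\<lambda>k. integral\<^sup>N M (\<lambda>y. ennreal (f k y)))"
    by (rule nn_integral_liminf) (use Cc0_meas[OF M f] in simp)
  also have "\<dots> \<le> limsup (\<lambda>k. integral\<^sup>N M (\<lambda>y. ennreal (f k y)))"
    by (rule Liminf_le_Limsup) simp
  also have "\<dots> \<le> C" by (rule Limsup_bounded) (simp add: bound)
  finally show ?thesis .
qed

lemma clamp0: "t \<le> 0 \<Longrightarrow> clamp t = 0" and clamp1: "1 \<le> t \<Longrightarrow> clamp t = 1"
  unfolding clamp_def by auto

definition cutF :: "('a::euclidean_space \<Rightarrow> real) \<Rightarrow> nat \<Rightarrow> 'a \<Rightarrow> real" where
  "cutF g k y = g y * (clamp (real (Suc k) * norm y - 1) * clamp (real (Suc k) + 1 - norm y))"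

definition cutG :: "real \<Rightarrow> nat \<Rightarrow> 'a::euclidean_space \<Rightarrow> real" where
  "cutG R k y = 1 * (clamp (real (Suc k) * (norm y - R) - 1) * clamp (real (Suc k) - norm y))"

lemma cutF_Cc0: assumes "continuous_on (- {0}) g" shows "Cc0 (cutF g k)"
  unfolding cutF_def
proof (rule Cc0_cut[OF assms, where a = "1 / real (Suc k)" and b = "real (Suc k) + 1"])
  show "continuous_on UNIV (\<lambda>t. clamp (real (Suc k) * t - 1) * clamp (real (Suc k) + 1 - t))"
    by (intro continuous_intros continuous_on_compose2[OF clamp_cont]) auto
  fix t :: real assume "t \<le> 1 / real (Suc k) \<or> real (Suc k) + 1 \<le> t"
  then show "clamp (real (Suc k) * t - 1) * clamp (real (Suc k) + 1 - t) = 0"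
  proof
    assume "t \<le> 1 / real (Suc k)"
    then have "real (Suc k) * t \<le> 1" by (simp add: field_simps)
    then show ?thesis by (simp add: clamp0)
  qed (simp add: clamp0)
qed simp

lemma cutG_Cc0: assumes "0 \<le> R" shows "Cc0 (cutG R k :: 'a::euclidean_space \<Rightarrow> real)"
  unfolding cutG_def
proof (rule Cc0_cut[where a = "R + 1 / real (Suc k)" and b = "real (Suc k)"])
  show "continuous_on UNIV (\<lambda>t. clamp (real (Suc k) * (t - R) - 1) * clamp (real (Suc k) - t))"
    by (intro continuous_intros continuous_on_compose2[OF clamp_cont]) auto
  show "continuous_on (- {0}) (\<lambda>_::'a. 1::real)" by simp
  show "0 < R + 1 / real (Suc k)" using assms by (simp add: add_nonneg_pos)
  fix t :: real assume "t \<le> R + 1 / real (Suc k) \<or> real (Suc k) \<le> t"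
  then show "clamp (real (Suc k) * (t - R) - 1) * clamp (real (Suc k) - t) = 0"
  proof
    assume "t \<le> R + 1 / real (Suc k)"
    then have "t - R \<le> 1 / real (Suc k)" by simp
    then have "real (Suc k) * (t - R) \<le> 1" by (simp add: field_simps)
    then show ?thesis by (simp add: clamp0)
  qed (simp add: clamp0)
qed

lemma cutF_bounds: assumes "\<And>y. y \<noteq> 0 \<Longrightarrow> g y \<ge> 0"
  shows "0 \<le> cutF g k y" "ennreal (cutF g k y) \<le> ennreal (g y)"
proof -
  have c: "0 \<le> clamp a * clamp b" "clamp a * clamp b \<le> 1" for a b
    using clamp_bounds[of a] clamp_bounds[of b] by (auto intro: mult_le_one)
  show "0 \<le> cutF g k y"
  proof (cases "y = 0")
    case True then show ?thesis by (simp add: cutF_def clamp0)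
  next
    case False then show ?thesis using assms c unfolding cutF_def by simp
  qed
  show "ennreal (cutF g k y) \<le> ennreal (g y)"
  proof (cases "y = 0")
    case True then show ?thesis by (simp add: cutF_def clamp0)
  next
    case False
    then have "cutF g k y \<le> g y" using assms c unfolding cutF_def
      by (simp add: mult_left_le)
    then show ?thesis by (rule ennreal_leI)
  qed
qed

lemma cutF_conv: assumes "y \<noteq> 0"
  shows "eventually (\<lambda>k. cutF g k y = g y) sequentially"
proof -
  have t: "norm y > 0" using assms by simp
  obtain N :: nat where N: "2 / norm y + norm y \<le> real N" using real_arch_simple by blast
  show ?thesis unfolding eventually_sequentially
  proof (intro exI allI impI)
    fix k assume "N \<le> k"
    then have n: "2 / norm y + norm y \<le> real (Suc k)" using N by simp
    then have "2 / norm y \<le> real (Suc k)" using t by linarith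
    then have "2 \<le> real (Suc k) * norm y" using t by (simp add: field_simps)
    moreover have "norm y \<le> real (Suc k)" using n t by (smt (verit) divide_pos_pos)
    ultimately show "cutF g k y = g y" unfolding cutF_def by (simp add: clamp1)
  qed
qed

lemma cutG_bounds: "0 \<le> cutG R k y" "cutG R k y \<le> 1"
  using clamp_bounds[of "real (Suc k) * (norm y - R) - 1"] clamp_bounds[of "real (Suc k) - norm y"]
  unfolding cutG_def by (auto intro: mult_le_one)

lemma cutG_le: "ennreal (cutG R k y) \<le> indicator {y. norm y > R} y"
proof (cases "norm y > R")
  case True then show ?thesis using cutG_bounds[of R k y] by simp
next
  case False
  then have "real (Suc k) * (norm y - R) - 1 \<le> 0"
    by (smt (verit) mult_nonneg_nonpos of_nat_0_le_iff)
  then show ?thesis using False unfolding cutG_def by (simp add: clamp0)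
qed

lemma cutG_conv:
  "eventually (\<lambda>k. ennreal (cutG R k y) = indicator {y. norm y > R} y) sequentially"
proof (cases "norm y > R")
  case True
  then have t: "norm y - R > 0" by simp
  obtain N :: nat where N: "2 / (norm y - R) + norm y + 1 \<le> real N" using real_arch_simple by blast
  show ?thesis unfolding eventually_sequentially
  proof (intro exI allI impI)
    fix k assume "N \<le> k"
    then have n: "2 / (norm y - R) + norm y + 1 \<le> real (Suc k)" using N by simp
    then have "2 / (norm y - R) \<le> real (Suc k)" using t by (smt (verit) divide_pos_pos norm_ge_zero)
    then have "2 \<le> real (Suc k) * (norm y - R)" using t by (simp add: field_simps)
    moreover have "norm y + 1 \<le> real (Suc k)" using n t by (smt (verit) divide_pos_pos)
    ultimately show "ennreal (cutG R k y) = indicator {y. norm y > R} y"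
      using True unfolding cutG_def by (simp add: clamp1)
  qed
next
  case False
  then have "real (Suc k) * (norm y - R) - 1 \<le> 0" for k
    by (smt (verit) mult_nonneg_nonpos of_nat_0_le_iff)
  then show ?thesis using False unfolding cutG_def by (simp add: clamp0)
qed

theorem lemmaA4:
  fixes g :: "'a::euclidean_space \<Rightarrow> real"
    and \<mu>s :: "nat \<Rightarrow> 'a \<Rightarrow> 'a measure"
    and \<mu> :: "'a \<Rightarrow> 'a measure"
  assumes "continuous_on (- {0}) g"
    and "\<And>y. y \<noteq> 0 \<Longrightarrow> g y \<ge> 0"
    and "\<And>n. \<mu>s n \<in> Kg g"
    and "\<And>x. Mplus (\<mu> x)"
    and "bdd_pointwise_conv g \<mu>s \<mu>"
  shows "\<mu> \<in> Kg g"
proof -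
  note gc = assms(1) and gpos = assms(2) and M = assms(4)
  have Ms: "Mplus (\<mu>s n x)" for n x using assms(3) unfolding Kg_def by auto
  have kmn: "kernel_measurable (\<mu>s n)" for n using assms(3) unfolding Kg_def by auto
  have S: "(SUP n. gnorm g (\<mu>s n)) < \<infinity>"
    and vc: "\<And>x. vague_conv (\<lambda>n. \<mu>s n x) (\<mu> x)"
    and T: "\<And>K. compact K \<Longrightarrow>
        ((\<lambda>R::real. SUP n. SUP x\<in>K. emeasure (\<mu>s n x) {y. norm y > R}) \<longlongrightarrow> 0) at_top"
    using assms(5) unfolding bdd_pointwise_conv_def by auto
  have km: "kernel_measurable \<mu>"
    unfolding kernel_measurable_def
  proof (intro allI impI)
    fix f :: "'a \<Rightarrow> real" assume f: "Cc0 f"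
    show "(\<lambda>x. integral\<^sup>L (\<mu> x) f) \<in> borel_measurable borel"
    proof (rule borel_measurable_LIMSEQ_real[where u = "\<lambda>n x. integral\<^sup>L (\<mu>s n x) f"])
      show "(\<lambda>n. integral\<^sup>L (\<mu>s n x) f) \<longlonglongrightarrow> integral\<^sup>L (\<mu> x) f" for x
        using vc[of x] f unfolding vague_conv_def by blast
      show "(\<lambda>x. integral\<^sup>L (\<mu>s n x) f) \<in> borel_measurable borel" for n
        using kmn[of n] f unfolding kernel_measurable_def by blast
    qed
  qed
  have gn: "gnorm g \<mu> < \<infinity>"
  proof -
    have "(\<integral>\<^sup>+ y. ennreal (g y) \<partial>(\<mu> x)) \<le> (SUP n. gnorm g (\<mu>s n))" for x
    proof (rule lsc[OF vc M Ms, where f = "cutF g"])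
      show "Cc0 (cutF g k)" for k by (rule cutF_Cc0[OF gc])
      show "0 \<le> cutF g k y" "ennreal (cutF g k y) \<le> ennreal (g y)" for k y
        using cutF_bounds[of g, OF gpos] by auto
      show "((\<lambda>k. ennreal (cutF g k y)) \<longlongrightarrow> ennreal (g y)) sequentially" if "y \<noteq> 0" for y
        by (rule tendsto_eventually) (use cutF_conv[OF that, of g] in \<open>auto elim: eventually_mono\<close>)
      show "(\<integral>\<^sup>+ y. ennreal (g y) \<partial>(\<mu>s n x)) \<le> (SUP n. gnorm g (\<mu>s n))" for n
      proof -
        have "(\<integral>\<^sup>+ y. ennreal (g y) \<partial>(\<mu>s n x)) \<le> gnorm g (\<mu>s n)"
          unfolding gnorm_def by (rule SUP_upper) simp
        also have "\<dots> \<le> (SUP n. gnorm g (\<mu>s n))" by (rule SUP_upper) simp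
        finally show ?thesis .
      qed
    qed
    then have "gnorm g \<mu> \<le> (SUP n. gnorm g (\<mu>s n))"
      unfolding gnorm_def by (rule SUP_least)
    then show ?thesis using S by (rule le_less_trans)
  qed
  have tight: "tight_on_compacts \<mu>"
    unfolding tight_on_compacts_def
  proof (intro allI impI)
    fix K :: "'a set" assume K: "compact K"
    have le: "(SUP x\<in>K. emeasure (\<mu> x) {y. norm y > R})
        \<le> (SUP n. SUP x\<in>K. emeasure (\<mu>s n x) {y. norm y > R})" if R: "0 \<le> R" for R
    proof (rule SUP_least)
      fix x assume x: "x \<in> K"
      have U: "{y::'a. norm y > R} \<in> sets borel"
        by (intro borel_open open_Collect_less continuous_intros)
      have eq: "emeasure N {y. norm y > R} = (\<integral>\<^sup>+ y. indicator {y. norm y > R} y \<partial>N)"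
        if "Mplus N" for N
        using that U unfolding Mplus_def by (simp add: nn_integral_indicator)
      have "(\<integral>\<^sup>+ y. indicator {y. norm y > R} y \<partial>(\<mu> x))
          \<le> (SUP n. SUP x\<in>K. emeasure (\<mu>s n x) {y. norm y > R})"
      proof (rule lsc[OF vc M Ms, where f = "cutG R"])
        show "Cc0 (cutG R k)" for k by (rule cutG_Cc0[OF R])
        show "0 \<le> cutG R k y" for k y by (rule cutG_bounds)
        show "ennreal (cutG R k y) \<le> indicator {y. norm y > R} y" for k y
          by (rule cutG_le)
        show "((\<lambda>k. ennreal (cutG R k y)) \<longlongrightarrow> indicator {y. norm y > R} y) sequentially" for y
          by (rule tendsto_eventually[OF cutG_conv])
        show "(\<integral>\<^sup>+ y. indicator {y. norm y > R} y \<partial>(\<mu>s n x))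
           \<le> (SUP n. SUP x\<in>K. emeasure (\<mu>s n x) {y. norm y > R})" for n
        proof -
          have "(\<integral>\<^sup>+ y. indicator {y. norm y > R} y \<partial>(\<mu>s n x)) = emeasure (\<mu>s n x) {y. norm y > R}"
            using eq[OF Ms] by simp
          also have "\<dots> \<le> (SUP x\<in>K. emeasure (\<mu>s n x) {y. norm y > R})" using x by (rule SUP_upper)
          also have "\<dots> \<le> (SUP n. SUP x\<in>K. emeasure (\<mu>s n x) {y. norm y > R})" by (rule SUP_upper) simp
          finally show ?thesis .
        qed
      qed
      then show "emeasure (\<mu> x) {y. norm y > R} \<le> (SUP n. SUP x\<in>K. emeasure (\<mu>s n x) {y. norm y > R})"
        using eq[OF M] by simp
    qed
    show "((\<lambda>R::real. SUP x\<in>K. emeasure (\<mu> x) {y. norm y > R}) \<longlongrightarrow> 0) at_top"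
    proof (rule tendsto_sandwich[OF _ _ tendsto_const T[OF K]])
      show "eventually (\<lambda>R. 0 \<le> (SUP x\<in>K. emeasure (\<mu> x) {y. norm y > R})) at_top" by simp
      show "eventually (\<lambda>R. (SUP x\<in>K. emeasure (\<mu> x) {y. norm y > R})
          \<le> (SUP n. SUP x\<in>K. emeasure (\<mu>s n x) {y. norm y > R})) at_top"
        using eventually_ge_at_top[of "0::real"] by eventually_elim (rule le)
    qed
  qed
  show ?thesis unfolding Kg_def using M km gn tight by auto
qed

end
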